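(* Let $R:[0,\infty)^2\to\mathbb{R}$ be any one of the following functions (with the stated parameter ranges), and let $\{G_t,t\ge 0\}$ be a one-dimensional centered Gaussian process with covariance $\mathbb{E}(G_sG_t)=R(s,t)$: \begin{enumerate} \item $R(t,s)=\frac{\Gamma(1-K)}{K(2-K)}\left[t^{2HK}+s^{2HK}-(t^{2H}+s^{2H})^{K}\right]$ if $K\in(0,1)$, and $R(t,s)=\frac{\Gamma(2-K)}{K(K-1)}\left[(t^{2H}+s^{2H})^{K}-t^{2HK}-s^{2HK}\right]$ if $K\in(1,2)$, where $H\in(0,1)$ and $HK\in(0,1)$; \item $R(s,t)=\frac12\left(s^{2H}+t^{2H}-|t-s|^{2H}\right)$, $H\in(0,1)$; \item $R(s,t)=(t+s)^{2H}-|t-s|^{2H}$, $H\in(0,1)$; \item $R(t,s)=s^{2H}+t^{2H}-\frac12\left((s+t)^{2H}+|t-s|^{2H}\right)$, $H\in(0,1)$; \item $R(s,t)=(s+t)^{2H}-(\max(s,t))^{2H}$, $H\in(0,\frac12)$; \item $R(s,t)=(\max(s,t))^{2H}-|t-s|^{2H}$, $H\in(0,\frac12)$; \item $R(t,s)=\frac12\left[t^{2H}+s^{2H}-K(t+s)^{2H}-(1-K)|t-s|^{2H}\right]$, $H\in(0,\frac12)$, $K\in(0,1)$; \item $R(t,s)=\frac{1}{2^K}\left((s^{2H}+t^{2H})^K-|t-s|^{2HK}\right)$, where either $H\in(0,1)$, $K\in(0,1)$, $HK\in(0,1)$, or $H\in(0,1)$, $K\in(1,2)$, $HK\in(0,1)$;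 \item $R(t,s)=(s^{2H}+t^{2H})^{K}-\frac12\left[(t+s)^{2HK}+|t-s|^{2HK}\right]$, where either $H\in(0,1)$, $K\in(1,2)$, $HK\in(0,1)$, or $H\in(0,\frac12)$, $K\in(0,1)$. \end{enumerate} Then $G$ satisfies both of the following: (i) there exist constants $c>0$ and $\beta<2$ such that $\mathbb{E}(G_t^2)\le c\,t^{\beta}$ for all $t\ge 0$; (ii) for every $n\ge1$ and all times $0<t_1<t_2<\cdots<t_n$, the covariance matrix $\mathbf{V}=(R(t_i,t_j))_{i,j=1}^n$ is strictly positive definite.
   Context: $\Gamma$ denotes the Euler Gamma function. A symmetric matrix $\mathbf V$ is strictly positive definite if $\mathbf a'\mathbf V\mathbf a>0$ for every nonzero $\mathbf a\in\mathbb{R}^n$. *)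

theory Defs
  imports "HOL-Probability.Probability"
begin

definition gaussian_rv :: "'a measure \<Rightarrow> ('a \<Rightarrow> real) \<Rightarrow> bool" where
  "gaussian_rv M X \<longleftrightarrow> X \<in> borel_measurable M \<and>
     ((\<exists>\<mu> \<sigma>. \<sigma> > 0 \<and> distributed M lborel X (normal_density \<mu> \<sigma>)) \<or>
      (\<exists>c. AE \<omega> in M. X \<omega> = c))"

definition gaussian_process :: "'a measure \<Rightarrow> (real \<Rightarrow> 'a \<Rightarrow> real) \<Rightarrow> bool" where
  "gaussian_process M G \<longleftrightarrow>
     (\<forall>t. t \<ge> 0 \<longrightarrow> G t \<in> borel_measurable M) \<and>
     (\<forall>(n::nat) (ts::nat \<Rightarrow> real) (a::nat \<Rightarrow> real). (\<forall>i<n. ts i \<ge> 0) \<longrightarrow>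
        gaussian_rv M (\<lambda>\<omega>. \<Sum>i<n. a i * G (ts i) \<omega>))"

definition cov1 :: "real \<Rightarrow> real \<Rightarrow> real \<Rightarrow> real \<Rightarrow> real" where
  "cov1 H K t s =
     (if K < 1 then Gamma (1 - K) / (K * (2 - K)) *
        (t powr (2*H*K) + s powr (2*H*K) - (t powr (2*H) + s powr (2*H)) powr K)
      else Gamma (2 - K) / (K * (K - 1)) *
        ((t powr (2*H) + s powr (2*H)) powr K - t powr (2*H*K) - s powr (2*H*K)))"

definition cov2 :: "real \<Rightarrow> real \<Rightarrow> real \<Rightarrow> real" where
  "cov2 H s t = (s powr (2*H) + t powr (2*H) - \<bar>t - s\<bar> powr (2*H)) / 2"

definition cov3 :: "real \<Rightarrow> real \<Rightarrow> real \<Rightarrow> real" where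
  "cov3 H s t = (t + s) powr (2*H) - \<bar>t - s\<bar> powr (2*H)"

definition cov4 :: "real \<Rightarrow> real \<Rightarrow> real \<Rightarrow> real" where
  "cov4 H t s = s powr (2*H) + t powr (2*H) - ((s + t) powr (2*H) + \<bar>t - s\<bar> powr (2*H)) / 2"

definition cov5 :: "real \<Rightarrow> real \<Rightarrow> real \<Rightarrow> real" where
  "cov5 H s t = (s + t) powr (2*H) - (max s t) powr (2*H)"

definition cov6 :: "real \<Rightarrow> real \<Rightarrow> real \<Rightarrow> real" where
  "cov6 H s t = (max s t) powr (2*H) - \<bar>t - s\<bar> powr (2*H)"

definition cov7 :: "real \<Rightarrow> real \<Rightarrow> real \<Rightarrow> real \<Rightarrow> real" where
  "cov7 H K t s = (t powr (2*H) + s powr (2*H) - K * (t + s) powr (2*H)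
                    - (1 - K) * \<bar>t - s\<bar> powr (2*H)) / 2"

definition cov8 :: "real \<Rightarrow> real \<Rightarrow> real \<Rightarrow> real \<Rightarrow> real" where
  "cov8 H K t s = ((s powr (2*H) + t powr (2*H)) powr K - \<bar>t - s\<bar> powr (2*H*K)) / 2 powr K"

definition cov9 :: "real \<Rightarrow> real \<Rightarrow> real \<Rightarrow> real \<Rightarrow> real" where
  "cov9 H K t s = (s powr (2*H) + t powr (2*H)) powr K
                   - ((t + s) powr (2*H*K) + \<bar>t - s\<bar> powr (2*H*K)) / 2"

end

theory Submission
  imports Defs
begin

definition O2 :: "(real \<Rightarrow> real) \<Rightarrow> real \<Rightarrow> bool" where
  "O2 f t \<longleftrightarrow> (\<exists>C \<delta>. \<delta> > 0 \<and> (\<forall>h. 0 < h \<and> h < \<delta> \<longrightarrow> \<bar>f (t+h) + f (t-h) - 2 * f t\<bar> \<le> C * h^2))"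

lemma O2_const[intro]: "O2 (\<lambda>s. c) t"
  unfolding O2_def by (rule exI[of _ 0], rule exI[of _ 1]) auto

lemma O2_add[intro]: assumes "O2 f t" "O2 g t" shows "O2 (\<lambda>s. f s + g s) t"
proof -
  obtain C1 d1 where 1: "d1 > 0" "\<forall>h. 0 < h \<and> h < d1 \<longrightarrow> \<bar>f (t+h) + f (t-h) - 2 * f t\<bar> \<le> C1 * h^2"
    using assms(1) unfolding O2_def by blast
  obtain C2 d2 where 2: "d2 > 0" "\<forall>h. 0 < h \<and> h < d2 \<longrightarrow> \<bar>g (t+h) + g (t-h) - 2 * g t\<bar> \<le> C2 * h^2"
    using assms(2) unfolding O2_def by blast
  show ?thesis unfolding O2_def
  proof (intro exI conjI allI impI)
    show "min d1 d2 > 0" using 1 2 by simp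
    fix h assume h: "0 < h \<and> h < min d1 d2"
    have a: "\<bar>f (t+h) + f (t-h) - 2 * f t\<bar> \<le> C1 * h^2" using 1 h by auto
    have b: "\<bar>g (t+h) + g (t-h) - 2 * g t\<bar> \<le> C2 * h^2" using 2 h by auto
    show "\<bar>f (t+h) + g (t+h) + (f (t-h) + g (t-h)) - 2 * (f t + g t)\<bar> \<le> (C1 + C2) * h^2"
      using a b by (simp add: algebra_simps abs_if split: if_splits)
  qed
qed

lemma O2_cmult[intro]: assumes "O2 f t" shows "O2 (\<lambda>s. c * f s) t"
proof -
  obtain C1 d1 where 1: "d1 > 0" "\<forall>h. 0 < h \<and> h < d1 \<longrightarrow> \<bar>f (t+h) + f (t-h) - 2 * f t\<bar> \<le> C1 * h^2"
    using assms(1) unfolding O2_def by blast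
  show ?thesis unfolding O2_def
  proof (intro exI conjI allI impI)
    show "d1 > 0" using 1 by simp
    fix h assume h: "0 < h \<and> h < d1"
    have a: "\<bar>f (t+h) + f (t-h) - 2 * f t\<bar> \<le> C1 * h^2" using 1 h by auto
    have "\<bar>c * f (t+h) + c * f (t-h) - 2 * (c * f t)\<bar> = \<bar>c\<bar> * \<bar>f (t+h) + f (t-h) - 2 * f t\<bar>"
      by (simp add: abs_mult[symmetric] algebra_simps)
    also have "\<dots> \<le> \<bar>c\<bar> * (C1 * h^2)" using a by (simp add: mult_left_mono)
    finally show "\<bar>c * f (t+h) + c * f (t-h) - 2 * (c * f t)\<bar> \<le> (\<bar>c\<bar> * C1) * h^2" by simp
  qed
qed

lemma O2_uminus[intro]: "O2 f t \<Longrightarrow> O2 (\<lambda>s. - f s) t"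
  using O2_cmult[of f t "-1"] by simp

lemma O2_diff[intro]: "O2 f t \<Longrightarrow> O2 g t \<Longrightarrow> O2 (\<lambda>s. f s - g s) t"
  using O2_add[of f t "\<lambda>s. - g s"] by auto

lemma O2_multc[intro]: "O2 f t \<Longrightarrow> O2 (\<lambda>s. f s * c) t"
  using O2_cmult[of f t c] by (simp add: mult.commute)

lemma O2_divc[intro]: "O2 f t \<Longrightarrow> O2 (\<lambda>s. f s / c) t"
  using O2_cmult[of f t "1/c"] by simp

lemma O2_sum: "finite A \<Longrightarrow> (\<And>j. j \<in> A \<Longrightarrow> O2 (f j) t) \<Longrightarrow> O2 (\<lambda>s. \<Sum>j\<in>A. f j s) t"
  by (induction A rule: finite_induct) auto

lemma O2_local:
  assumes "O2 g t" "d > 0" "\<And>s. \<bar>s - t\<bar> < d \<Longrightarrow> f s = g s"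
  shows "O2 f t"
proof -
  obtain C1 d1 where 1: "d1 > 0" "\<forall>h. 0 < h \<and> h < d1 \<longrightarrow> \<bar>g (t+h) + g (t-h) - 2 * g t\<bar> \<le> C1 * h^2"
    using assms(1) unfolding O2_def by blast
  show ?thesis unfolding O2_def
  proof (intro exI conjI allI impI)
    show "min d1 d > 0" using 1 assms by simp
    fix h assume h: "0 < h \<and> h < min d1 d"
    then have "f (t+h) = g (t+h)" "f (t-h) = g (t-h)" "f t = g t" using assms(3)[of "t+h"] assms(3)[of "t-h"] assms(3)[of t] assms(2) by auto
    then show "\<bar>f (t+h) + f (t-h) - 2 * f t\<bar> \<le> C1 * h^2" using 1 h by auto
  qed
qed

definition C2on :: "(real \<Rightarrow> real) \<Rightarrow> real set \<Rightarrow> bool" where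
  "C2on f I \<longleftrightarrow> (\<exists>f1 f2. (\<forall>x\<in>I. (f has_real_derivative f1 x) (at x) \<and> (f1 has_real_derivative f2 x) (at x))
      \<and> continuous_on I f2)"

lemma C2on_O2:
  assumes "C2on f {t-d..t+d}" "d > 0"
  shows "O2 f t"
proof -
  obtain f1 f2 where D: "\<forall>x\<in>{t-d..t+d}. (f has_real_derivative f1 x) (at x) \<and> (f1 has_real_derivative f2 x) (at x)"
    and c: "continuous_on {t-d..t+d} f2" using assms(1) unfolding C2on_def by blast
  obtain B where B: "\<forall>x\<in>{t-d..t+d}. norm (f2 x) \<le> B"
    using compact_imp_bounded[OF compact_continuous_image[OF c compact_Icc]] unfolding bounded_iff by auto
  define diff where "diff = (\<lambda>m::nat. if m = 0 then f else if m = 1 then f1 else f2)"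
  have DD: "\<forall>m x. m < 2 \<and> t-d \<le> x \<and> x \<le> t+d \<longrightarrow> DERIV (diff m) x :> diff (Suc m) x"
    using D by (auto simp: diff_def less_2_cases_iff)
  show ?thesis unfolding O2_def
  proof (intro exI conjI allI impI)
    show "d > 0" by fact
    fix h assume h: "0 < h \<and> h < d"
    obtain y1 where y1: "t < y1 \<and> y1 < t+h"
       "f (t+h) = (\<Sum>m<2. (diff m t / fact m) * ((t+h) - t)^m) + (diff 2 y1 / fact 2) * ((t+h) - t)^2"
      using Taylor[of 2 diff f "t-d" "t+d" t "t+h"] DD h by (auto simp: diff_def)
    obtain y2 where y2: "t-h < y2 \<and> y2 < t"
       "f (t-h) = (\<Sum>m<2. (diff m t / fact m) * ((t-h) - t)^m) + (diff 2 y2 / fact 2) * ((t-h) - t)^2"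
      using Taylor[of 2 diff f "t-d" "t+d" t "t-h"] DD h by (auto simp: diff_def)
    have e: "f (t+h) + f (t-h) - 2 * f t = (f2 y1 + f2 y2) / 2 * h^2"
      using y1(2) y2(2) by (simp add: diff_def numeral_2_eq_2 power2_eq_square algebra_simps)
    have "\<bar>f2 y1\<bar> \<le> B" "\<bar>f2 y2\<bar> \<le> B" using B y1 y2 h by auto
    then have "\<bar>(f2 y1 + f2 y2) / 2\<bar> \<le> B" by simp
    then have "\<bar>(f2 y1 + f2 y2) / 2\<bar> * h^2 \<le> B * h^2" by (intro mult_right_mono) auto
    then show "\<bar>f (t+h) + f (t-h) - 2 * f t\<bar> \<le> B * h^2" by (simp only: e abs_mult abs_power2)
  qed
qed

lemma C2on_const: "C2on (\<lambda>x. c) I"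
  unfolding C2on_def by (rule exI[of _ "\<lambda>x. 0"], rule exI[of _ "\<lambda>x. 0"]) auto

lemma C2on_affine: "C2on (\<lambda>x. \<alpha> * x + \<beta>) I"
  unfolding C2on_def
  by (rule exI[of _ "\<lambda>x. \<alpha>"], rule exI[of _ "\<lambda>x. 0"]) (auto intro!: derivative_eq_intros)

lemma C2on_add: assumes "C2on f I" "C2on g I" shows "C2on (\<lambda>x. f x + g x) I"
proof -
  obtain f1 f2 where f: "\<forall>x\<in>I. (f has_real_derivative f1 x) (at x) \<and> (f1 has_real_derivative f2 x) (at x)" "continuous_on I f2"
    using assms(1) unfolding C2on_def by blast
  obtain g1 g2 where g: "\<forall>x\<in>I. (g has_real_derivative g1 x) (at x) \<and> (g1 has_real_derivative g2 x) (at x)" "continuous_on I g2"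
    using assms(2) unfolding C2on_def by blast
  show ?thesis unfolding C2on_def
    by (rule exI[of _ "\<lambda>x. f1 x + g1 x"], rule exI[of _ "\<lambda>x. f2 x + g2 x"])
       (use f g in \<open>auto intro!: derivative_intros continuous_intros\<close>)
qed

lemma C2on_powr: assumes "C2on p I" "\<And>x. x \<in> I \<Longrightarrow> p x > 0" shows "C2on (\<lambda>x. p x powr a) I"
proof -
  obtain p1 p2 where p: "\<forall>x\<in>I. (p has_real_derivative p1 x) (at x) \<and> (p1 has_real_derivative p2 x) (at x)" "continuous_on I p2"
    using assms(1) unfolding C2on_def by blast
  have pos': "x \<in> I \<Longrightarrow> p x \<noteq> 0" for x using assms(2)[of x] by simp
  have cp: "continuous_on I p" using p(1) by (meson DERIV_isCont continuous_at_imp_continuous_on)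
  have cp1: "continuous_on I p1" using p(1) by (meson DERIV_isCont continuous_at_imp_continuous_on)
  show ?thesis unfolding C2on_def
  proof (rule exI[of _ "\<lambda>x. a * p x powr (a-1) * p1 x"],
         rule exI[of _ "\<lambda>x. a * ((a-1) * p x powr (a-2) * p1 x * p1 x + p x powr (a-1) * p2 x)"], intro conjI ballI)
    fix x assume x: "x \<in> I"
    show "((\<lambda>x. p x powr a) has_real_derivative a * p x powr (a-1) * p1 x) (at x)"
      using DERIV_fun_powr[where g=p and x=x and m="p1 x" and r=a] p x assms(2)[OF x] by simp
    have "((\<lambda>x. p x powr (a-1)) has_real_derivative (a-1) * p x powr (a-1-1) * p1 x) (at x)"
      using DERIV_fun_powr[where g=p and x=x and m="p1 x" and r="a-1"] p x assms(2)[OF x] by simp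
    then have "((\<lambda>x. a * p x powr (a-1) * p1 x) has_real_derivative
       a * ((a-1) * p x powr (a-1-1) * p1 x) * p1 x + a * p x powr (a-1) * p2 x) (at x)"
      using p x assms(2)[OF x] by (auto intro!: derivative_eq_intros)
    then show "((\<lambda>x. a * p x powr (a-1) * p1 x) has_real_derivative
       a * ((a-1) * p x powr (a-2) * p1 x * p1 x + p x powr (a-1) * p2 x)) (at x)"
      by (simp add: algebra_simps)
  next
    show "continuous_on I (\<lambda>x. a * ((a-1) * p x powr (a-2) * p1 x * p1 x + p x powr (a-1) * p2 x))"
      using cp cp1 p(2) assms(2) by (auto intro!: continuous_intros simp: pos')
  qed
qed

lemma O2_affine_powr:
  assumes "\<alpha> * t + \<beta> > 0"
  shows "O2 (\<lambda>s. (\<alpha> * s + \<beta>) powr a) t"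
proof -
  define d where "d = (\<alpha> * t + \<beta>) / (2 * (\<bar>\<alpha>\<bar> + 1))"
  have d: "d > 0" using assms unfolding d_def by (intro divide_pos_pos) auto
  have pos: "\<alpha> * x + \<beta> > 0" if "x \<in> {t-d..t+d}" for x
  proof -
    have "\<bar>x - t\<bar> \<le> d" using that by auto
    then have 1: "\<bar>\<alpha> * (x - t)\<bar> \<le> \<bar>\<alpha>\<bar> * d" unfolding abs_mult by (intro mult_left_mono) auto
    have 2: "\<bar>\<alpha>\<bar> * d = (\<alpha> * t + \<beta>) * (\<bar>\<alpha>\<bar> / (2 * (\<bar>\<alpha>\<bar> + 1)))" unfolding d_def by simp
    have "\<bar>\<alpha>\<bar> / (2 * (\<bar>\<alpha>\<bar> + 1)) < 1" by simp
    then have 3: "(\<alpha> * t + \<beta>) * (\<bar>\<alpha>\<bar> / (2 * (\<bar>\<alpha>\<bar> + 1))) < (\<alpha> * t + \<beta>)"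
      using mult_strict_left_mono[of "\<bar>\<alpha>\<bar> / (2 * (\<bar>\<alpha>\<bar> + 1))" 1 "\<alpha> * t + \<beta>"] assms by simp
    have 4: "-(\<alpha> * (x - t)) \<le> \<bar>\<alpha> * (x - t)\<bar>" by (rule abs_ge_minus_self)
    have 5: "\<alpha> * x + \<beta> = (\<alpha> * t + \<beta>) + \<alpha> * (x - t)" by (simp add: algebra_simps)
    show ?thesis using 1 2 3 4 5 by linarith
  qed
  have "C2on (\<lambda>s. (\<alpha> * s + \<beta>) powr a) {t-d..t+d}"
    by (rule C2on_powr[OF C2on_affine]) (rule pos)
  then show ?thesis by (rule C2on_O2[OF _ d])
qed

lemma O2_powrpowr:
  assumes "t > 0" "c \<ge> 0"
  shows "O2 (\<lambda>s. (s powr b + c) powr K) t"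
proof -
  define I where "I = {t-t/2..t+t/2}"
  have pos: "x > 0" if "x \<in> I" for x using that assms by (auto simp: I_def)
  have pos2: "(1 * x + 0) powr b + c > 0" if "x \<in> I" for x
  proof -
    have "x > 0" using pos[OF that] .
    then have "(1 * x + 0) powr b > 0" by simp
    then show ?thesis using assms(2) by linarith
  qed
  have c1: "C2on (\<lambda>x. 1 * x + 0) I" by (rule C2on_affine)
  have c2: "C2on (\<lambda>x. (1 * x + 0) powr b) I" 
    apply (rule C2on_powr[OF c1])
    using pos by simp
  have c3: "C2on (\<lambda>x. (1 * x + 0) powr b + c) I" 
    by (rule C2on_add[OF c2 C2on_const])
  have "C2on (\<lambda>x. ((1 * x + 0) powr b + c) powr K) I"
    apply (rule C2on_powr[OF c3])
    using pos2 by simp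
  then have "C2on (\<lambda>x. (x powr b + c) powr K) {t-t/2..t+t/2}" by (simp add: I_def)
  then show ?thesis by (rule C2on_O2) (use assms in simp)
qed

lemma powr_tendsto_0_right: "e > 0 \<Longrightarrow> ((\<lambda>h::real. h powr e) \<longlongrightarrow> 0) (at_right 0)"
  apply (rule tendsto_zero_powrI[where b=e, OF tendsto_ident_at tendsto_const])
  using eventually_at_right_less[of "0::real"] apply (auto elim: eventually_mono)
  done

lemma not_O2:
  assumes lim: "((\<lambda>h. (f (t+h) + f (t-h) - 2*f t) / h powr \<gamma>) \<longlongrightarrow> L) (at_right 0)"
    and L: "L \<noteq> 0" and g: "\<gamma> < 2"
  shows "\<not> O2 f t"
proof
  assume "O2 f t"
  then obtain C d where d: "d > 0" "\<forall>h. 0 < h \<and> h < d \<longrightarrow> \<bar>f (t+h) + f (t-h) - 2 * f t\<bar> \<le> C * h^2"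
    unfolding O2_def by blast
  have ev: "eventually (\<lambda>h. \<bar>(f (t+h) + f (t-h) - 2*f t) / h powr \<gamma>\<bar> \<le> C * h powr (2 - \<gamma>)) (at_right 0)"
    using eventually_at_right_real[OF d(1)]
  proof eventually_elim
    case (elim h)
    then have h: "0 < h" "h < d" by auto
    have "\<bar>(f (t+h) + f (t-h) - 2*f t) / h powr \<gamma>\<bar> = \<bar>f (t+h) + f (t-h) - 2*f t\<bar> / h powr \<gamma>"
      using h by (simp add: abs_divide)
    also have "\<dots> \<le> C * h^2 / h powr \<gamma>"
      using d(2) h by (intro divide_right_mono) auto
    also have "\<dots> = C * h powr (2 - \<gamma>)"
      using h by (simp add: powr_diff powr_realpow)
    finally show ?case .
  qed
  have "((\<lambda>h. C * h powr (2 - \<gamma>)) \<longlongrightarrow> C * 0) (at_right 0)"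
    using g by (intro tendsto_mult tendsto_const powr_tendsto_0_right) auto
  then have "\<bar>L\<bar> \<le> C * 0"
    using tendsto_rabs[OF lim] ev by (intro tendsto_le[of "at_right (0::real)"]) auto
  then show False using L by simp
qed

lemma sing_abs:
  assumes "0 < \<gamma>" "\<gamma> < 2"
  shows "\<not> O2 (\<lambda>s. \<bar>s - t\<bar> powr \<gamma>) t"
proof (rule not_O2[where L=2 and \<gamma>=\<gamma>])
  have "eventually (\<lambda>h. 2 = (\<bar>t + h - t\<bar> powr \<gamma> + \<bar>t - h - t\<bar> powr \<gamma> - 2 * \<bar>t - t\<bar> powr \<gamma>) / h powr \<gamma>) (at_right (0::real))"
    using eventually_at_right_less[of "0::real"] by eventually_elim auto
  then show "((\<lambda>h. (\<bar>t + h - t\<bar> powr \<gamma> + \<bar>t - h - t\<bar> powr \<gamma> - 2 * \<bar>t - t\<bar> powr \<gamma>) / h powr \<gamma>) \<longlongrightarrow> 2) (at_right 0)"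
    by (rule Lim_transform_eventually[OF tendsto_const])
qed (use assms in auto)

lemma powr_diffquot:
  fixes t a :: real
  assumes "t > 0"
  shows "((\<lambda>h. ((t+h) powr a - t powr a) / h) \<longlongrightarrow> a * t powr (a - 1)) (at_right 0)"
proof -
  have "DERIV (\<lambda>x. x powr a) t :> a * t powr (a - 1)" using has_real_derivative_powr[OF assms] .
  then have "((\<lambda>h. ((t+h) powr a - t powr a) / h) \<longlongrightarrow> a * t powr (a - 1)) (at 0)"
    unfolding DERIV_def by simp
  then show ?thesis by (rule tendsto_mono[OF at_le[OF subset_UNIV]])
qed

lemma sing_max:
  assumes "t > 0" "a \<noteq> 0"
  shows "\<not> O2 (\<lambda>s. max s t powr a) t"
proof (rule not_O2[where L="a * t powr (a - 1)" and \<gamma>=1])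
  have "eventually (\<lambda>h. ((t+h) powr a - t powr a) / h = (max (t + h) t powr a + max (t - h) t powr a - 2 * max t t powr a) / h powr 1) (at_right (0::real))"
    using eventually_at_right_less[of "0::real"] by eventually_elim auto
  then show "((\<lambda>h. (max (t + h) t powr a + max (t - h) t powr a - 2 * max t t powr a) / h powr 1) \<longlongrightarrow> a * t powr (a - 1)) (at_right 0)"
    by (rule Lim_transform_eventually[OF powr_diffquot[OF assms(1)]])
qed (use assms in auto)

lemma sing_six:
  assumes "t > 0" "0 < a" "a < 1"
  shows "\<not> O2 (\<lambda>s. max s t powr a - \<bar>s - t\<bar> powr a) t"
proof (rule not_O2[where L="-2" and \<gamma>=a])
  have lim: "((\<lambda>h. ((t+h) powr a - t powr a) / h * h powr (1 - a) - 2) \<longlongrightarrow> a * t powr (a - 1) * 0 - 2) (at_right 0)"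
    using assms by (intro tendsto_diff tendsto_mult powr_diffquot powr_tendsto_0_right tendsto_const) auto
  have "eventually (\<lambda>h. ((t+h) powr a - t powr a) / h * h powr (1 - a) - 2 =
     (max (t + h) t powr a - \<bar>t + h - t\<bar> powr a + (max (t - h) t powr a - \<bar>t - h - t\<bar> powr a) - 2 * (max t t powr a - \<bar>t - t\<bar> powr a)) / h powr a) (at_right (0::real))"
    using eventually_at_right_less[of "0::real"]
  proof eventually_elim
    case (elim h)
    then have e: "h powr (1 - a) = h / h powr a" by (simp add: powr_diff)
    show ?case using elim by (simp add: e field_simps)
  qed
  then show "((\<lambda>h. (max (t + h) t powr a - \<bar>t + h - t\<bar> powr a + (max (t - h) t powr a - \<bar>t - h - t\<bar> powr a) - 2 * (max t t powr a - \<bar>t - t\<bar> powr a)) / h powr a) \<longlongrightarrow> -2) (at_right 0)"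
    using Lim_transform_eventually[OF lim] by simp
qed (use assms in auto)

lemma O2_pow: "t > 0 \<Longrightarrow> O2 (\<lambda>s. s powr a) t"
  using O2_affine_powr[of 1 t 0 a] by simp

lemma O2_spc: "t + c > 0 \<Longrightarrow> O2 (\<lambda>s. (s + c) powr a) t"
  using O2_affine_powr[of 1 t c a] by simp

lemma O2_cps: "t + c > 0 \<Longrightarrow> O2 (\<lambda>s. (c + s) powr a) t"
  using O2_affine_powr[of 1 t c a] by (simp add: add.commute)

lemma O2_abs1: assumes "c \<noteq> t" shows "O2 (\<lambda>s. \<bar>s - c\<bar> powr a) t"
proof (cases "c < t")
  case True
  show ?thesis
    by (rule O2_local[OF O2_affine_powr[of 1 t "-c" a], of "t - c"]) (use True in auto)
next
  case False
  then have "t < c" using assms by simp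
  then show ?thesis
    by (intro O2_local[OF O2_affine_powr[of "-1" t c a], of "c - t"]) auto
qed

lemma O2_abs2: "c \<noteq> t \<Longrightarrow> O2 (\<lambda>s. \<bar>c - s\<bar> powr a) t"
  using O2_abs1[of c t a] by (simp add: abs_minus_commute)

lemma O2_max1: assumes "c \<noteq> t" "t > 0" shows "O2 (\<lambda>s. max s c powr a) t"
proof (cases "c < t")
  case True
  show ?thesis
    by (rule O2_local[OF O2_pow[of t a], of "t - c"]) (use True assms in auto)
next
  case False
  then have "t < c" using assms by simp
  then show ?thesis
    by (intro O2_local[OF O2_const, of "c - t"]) auto
qed

lemma O2_pp1: "t > 0 \<Longrightarrow> c \<ge> 0 \<Longrightarrow> O2 (\<lambda>s. (s powr b + c) powr K) t"
  by (rule O2_powrpowr)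

lemma O2_pp2: "t > 0 \<Longrightarrow> c \<ge> 0 \<Longrightarrow> O2 (\<lambda>s. (c + s powr b) powr K) t"
  using O2_powrpowr[of t c b K] by (simp add: add.commute)

lemma sing_decomp:
  assumes "\<And>s. R s = S s + c * Q s" "O2 S t" "\<not> O2 Q t" "c \<noteq> 0"
  shows "\<not> O2 R t"
proof
  assume "O2 R t"
  then have "O2 (\<lambda>s. (R s - S s) / c) t" using assms(2) by auto
  moreover have "(\<lambda>s. (R s - S s) / c) = Q" using assms(1,4) by (auto simp: field_simps)
  ultimately show False using assms(3) by simp
qed

lemma indep_sing:
  fixes R :: "real \<Rightarrow> real \<Rightarrow> real" and ts :: "nat \<Rightarrow> real" and n :: nat
  assumes F: "\<And>s. s \<ge> 0 \<Longrightarrow> (\<Sum>j<n. a j * R s (ts j)) = 0"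
    and pos: "\<And>j. j < n \<Longrightarrow> ts j > 0" and inj: "inj_on ts {..<n}" and m: "m < n"
    and A: "\<And>t u. t > 0 \<Longrightarrow> u > 0 \<Longrightarrow> u \<noteq> t \<Longrightarrow> O2 (\<lambda>s. R s u) t"
    and B: "\<And>t. t > 0 \<Longrightarrow> \<not> O2 (\<lambda>s. R s t) t"
  shows "a m = 0"
proof (rule ccontr)
  assume am: "a m \<noteq> 0"
  define t where "t = ts m"
  have t: "t > 0" using pos m t_def by simp
  have rest: "O2 (\<lambda>s. \<Sum>j\<in>{..<n} - {m}. a j * R s (ts j)) t"
  proof (rule O2_sum)
    fix j assume j: "j \<in> {..<n} - {m}"
    then have "ts j \<noteq> t" using inj m unfolding t_def inj_on_def by auto
    then show "O2 (\<lambda>s. a j * R s (ts j)) t" using A[OF t pos[of j]] j by auto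
  qed simp
  have F0: "O2 (\<lambda>s. \<Sum>j<n. a j * R s (ts j)) t"
    by (rule O2_local[OF O2_const[of 0], of t]) (use t F in auto)
  have split: "(\<Sum>j<n. a j * R s (ts j)) = a m * R s t + (\<Sum>j\<in>{..<n} - {m}. a j * R s (ts j))" for s
    using m by (subst sum.remove[of "{..<n}" m]) (auto simp: t_def)
  have "O2 (\<lambda>s. ((\<Sum>j<n. a j * R s (ts j)) - (\<Sum>j\<in>{..<n} - {m}. a j * R s (ts j))) / a m) t"
    using F0 rest by auto
  moreover have "(\<lambda>s. ((\<Sum>j<n. a j * R s (ts j)) - (\<Sum>j\<in>{..<n} - {m}. a j * R s (ts j))) / a m) = (\<lambda>s. R s t)"
    using am by (auto simp: split)
  ultimately show False using B[OF t] by simp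
qed

lemmas O2_rules = O2_divc O2_diff O2_add O2_cmult O2_pow O2_const O2_abs1 O2_abs2 O2_spc O2_cps O2_max1 O2_pp1 O2_pp2

lemma cov2_A: "t > 0 \<Longrightarrow> u > 0 \<Longrightarrow> u \<noteq> t \<Longrightarrow> O2 (\<lambda>s. cov2 H s u) t"
  unfolding cov2_def by (intro O2_rules) auto
lemma cov3_A: "t > 0 \<Longrightarrow> u > 0 \<Longrightarrow> u \<noteq> t \<Longrightarrow> O2 (\<lambda>s. cov3 H s u) t"
  unfolding cov3_def by (intro O2_rules) auto
lemma cov4_A: "t > 0 \<Longrightarrow> u > 0 \<Longrightarrow> u \<noteq> t \<Longrightarrow> O2 (\<lambda>s. cov4 H s u) t"
  unfolding cov4_def by (intro O2_rules) auto
lemma cov5_A: "t > 0 \<Longrightarrow> u > 0 \<Longrightarrow> u \<noteq> t \<Longrightarrow> O2 (\<lambda>s. cov5 H s u) t"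
  unfolding cov5_def by (intro O2_rules) auto
lemma cov6_A: "t > 0 \<Longrightarrow> u > 0 \<Longrightarrow> u \<noteq> t \<Longrightarrow> O2 (\<lambda>s. cov6 H s u) t"
  unfolding cov6_def by (intro O2_rules) auto
lemma cov7_A: "t > 0 \<Longrightarrow> u > 0 \<Longrightarrow> u \<noteq> t \<Longrightarrow> O2 (\<lambda>s. cov7 H K s u) t"
  unfolding cov7_def by (intro O2_rules) auto
lemma cov8_A: "t > 0 \<Longrightarrow> u > 0 \<Longrightarrow> u \<noteq> t \<Longrightarrow> O2 (\<lambda>s. cov8 H K s u) t"
  unfolding cov8_def by (intro O2_rules) auto
lemma cov9_A: "t > 0 \<Longrightarrow> u > 0 \<Longrightarrow> u \<noteq> t \<Longrightarrow> O2 (\<lambda>s. cov9 H K s u) t"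
  unfolding cov9_def by (intro O2_rules) auto

lemma cov2_B: "t > 0 \<Longrightarrow> 0 < H \<Longrightarrow> H < 1 \<Longrightarrow> \<not> O2 (\<lambda>s. cov2 H s t) t"
  apply (rule sing_decomp[where S="\<lambda>s. (s powr (2*H) + t powr (2*H)) / 2" and c="-1/2" and Q="\<lambda>s. \<bar>s - t\<bar> powr (2*H)"])
  subgoal by (simp add: cov2_def abs_minus_commute field_simps)
  subgoal by (intro O2_rules) auto
  subgoal by (rule sing_abs) auto
  subgoal by simp
  done

lemma cov3_B: "t > 0 \<Longrightarrow> 0 < H \<Longrightarrow> H < 1 \<Longrightarrow> \<not> O2 (\<lambda>s. cov3 H s t) t"
  apply (rule sing_decomp[where S="\<lambda>s. (s + t) powr (2*H)" and c="-1" and Q="\<lambda>s. \<bar>s - t\<bar> powr (2*H)"])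
  subgoal by (simp add: cov3_def abs_minus_commute add.commute)
  subgoal by (intro O2_rules) auto
  subgoal by (rule sing_abs) auto
  subgoal by simp
  done

lemma cov4_B: "t > 0 \<Longrightarrow> 0 < H \<Longrightarrow> H < 1 \<Longrightarrow> \<not> O2 (\<lambda>s. cov4 H s t) t"
  apply (rule sing_decomp[where S="\<lambda>s. t powr (2*H) + s powr (2*H) - (s + t) powr (2*H) / 2" and c="-1/2" and Q="\<lambda>s. \<bar>s - t\<bar> powr (2*H)"])
  subgoal by (simp add: cov4_def abs_minus_commute add.commute field_simps)
  subgoal by (intro O2_rules) auto
  subgoal by (rule sing_abs) auto
  subgoal by simp
  done

lemma cov5_B: "t > 0 \<Longrightarrow> 0 < H \<Longrightarrow> \<not> O2 (\<lambda>s. cov5 H s t) t"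
  apply (rule sing_decomp[where S="\<lambda>s. (s + t) powr (2*H)" and c="-1" and Q="\<lambda>s. max s t powr (2*H)"])
  subgoal by (simp add: cov5_def)
  subgoal by (intro O2_rules) auto
  subgoal by (rule sing_max) auto
  subgoal by simp
  done

lemma cov6_B: "t > 0 \<Longrightarrow> 0 < H \<Longrightarrow> H < 1/2 \<Longrightarrow> \<not> O2 (\<lambda>s. cov6 H s t) t"
  apply (rule sing_decomp[where S="\<lambda>s. 0" and c="1" and Q="\<lambda>s. max s t powr (2*H) - \<bar>s - t\<bar> powr (2*H)"])
  subgoal by (simp add: cov6_def abs_minus_commute)
  subgoal by (rule O2_const)
  subgoal by (rule sing_six) auto
  subgoal by simp
  done

lemma cov7_B: "t > 0 \<Longrightarrow> 0 < H \<Longrightarrow> H < 1 \<Longrightarrow> K \<noteq> 1 \<Longrightarrow> \<not> O2 (\<lambda>s. cov7 H K s t) t"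
  apply (rule sing_decomp[where S="\<lambda>s. (s powr (2*H) + t powr (2*H) - K * (s + t) powr (2*H)) / 2" and c="-(1-K)/2" and Q="\<lambda>s. \<bar>s - t\<bar> powr (2*H)"])
  subgoal by (simp add: cov7_def abs_minus_commute field_simps)
  subgoal by (intro O2_rules) auto
  subgoal by (rule sing_abs) auto
  subgoal by simp
  done

lemma cov8_B: "t > 0 \<Longrightarrow> 0 < H * K \<Longrightarrow> H * K < 1 \<Longrightarrow> \<not> O2 (\<lambda>s. cov8 H K s t) t"
  apply (rule sing_decomp[where S="\<lambda>s. (t powr (2*H) + s powr (2*H)) powr K / 2 powr K" and c="-1 / 2 powr K" and Q="\<lambda>s. \<bar>s - t\<bar> powr (2*H*K)"])
  subgoal by (simp add: cov8_def abs_minus_commute diff_divide_distrib)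
  subgoal by (intro O2_rules) auto
  subgoal by (rule sing_abs) auto
  subgoal by simp
  done

lemma cov9_B: "t > 0 \<Longrightarrow> 0 < H * K \<Longrightarrow> H * K < 1 \<Longrightarrow> \<not> O2 (\<lambda>s. cov9 H K s t) t"
  apply (rule sing_decomp[where S="\<lambda>s. (t powr (2*H) + s powr (2*H)) powr K - (s + t) powr (2*H*K) / 2" and c="-1/2" and Q="\<lambda>s. \<bar>s - t\<bar> powr (2*H*K)"])
  subgoal by (simp add: cov9_def abs_minus_commute field_simps)
  subgoal by (intro O2_rules) auto
  subgoal by (rule sing_abs) auto
  subgoal by simp
  done

lemma vander:
  fixes y z :: "nat \<Rightarrow> real"
  assumes "inj_on y {..<N}" "\<And>k. (\<Sum>i<N. z i * y i ^ k) = 0" "i < N"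
  shows "z i = 0"
  using assms
proof (induction N arbitrary: z i)
  case 0
  then show ?case by simp
next
  case (Suc N)
  define z' where "z' i = z i * (y i - y N)" for i
  have inj: "inj_on y {..<N}" using Suc.prems(1) by (auto simp: inj_on_def)
  have "(\<Sum>i<N. z' i * y i ^ k) = 0" for k
  proof -
    have "(\<Sum>i<N. z' i * y i ^ k) = (\<Sum>i<Suc N. z i * (y i - y N) * y i ^ k)"
      by (simp add: z'_def)
    also have "\<dots> = (\<Sum>i<Suc N. z i * y i ^ Suc k) - y N * (\<Sum>i<Suc N. z i * y i ^ k)"
      by (simp add: sum_distrib_left sum_subtractf[symmetric] algebra_simps del: sum.lessThan_Suc)
    also have "\<dots> = 0" using Suc.prems(2)[of "Suc k"] Suc.prems(2)[of k] by simp
    finally show ?thesis .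
  qed
  then have z'0: "\<And>i. i < N \<Longrightarrow> z' i = 0" using Suc.IH[OF inj] by blast
  have zi: "z i = 0" if "i < N" for i
  proof -
    have "y i \<noteq> y N" using Suc.prems(1) that unfolding inj_on_def by (metis lessThan_iff less_SucI lessI less_irrefl)
    then show ?thesis using z'0[OF that] by (simp add: z'_def)
  qed
  have "(\<Sum>i<Suc N. z i * y i ^ 0) = z N" using zi by simp
  then have "z N = 0" using Suc.prems(2)[of 0] by simp
  then show ?case using zi Suc.prems(3) by (cases "i = N") auto
qed

lemma deriv_zero:
  fixes f :: "real \<Rightarrow> real"
  assumes "\<And>x. x > 0 \<Longrightarrow> f x = 0" "x > 0" "(f has_real_derivative D) (at x)"
  shows "D = 0"
proof -
  have "(f has_real_derivative 0) (at x)"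
    by (rule has_field_derivative_transform_within_open[OF DERIV_const open_greaterThan[of 0]])
       (use assms in auto)
  then show ?thesis using DERIV_unique assms(3) by blast
qed

lemma powsum_derivs:
  fixes w d :: "nat \<Rightarrow> real"
  assumes base: "\<And>x. x > 0 \<Longrightarrow> (\<Sum>i<N. w i * (x + d i) powr K) + C = 0"
    and d: "\<And>i. i < N \<Longrightarrow> d i \<ge> 0"
    and K: "\<And>m::nat. K \<noteq> real m"
  shows "\<And>x. x > 0 \<Longrightarrow> (\<Sum>i<N. w i * (x + d i) powr (K - real m)) + (if m = 0 then C else 0) = 0"
proof (induction m)
  case 0
  then show ?case using base by simp
next
  case (Suc m)
  define c where "c = (if m = 0 then C else 0)"
  have D: "((\<lambda>x. (\<Sum>i<N. w i * (x + d i) powr (K - real m)) + c) has_real_derivative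
        (\<Sum>i<N. w i * ((K - real m) * (x + d i) powr (K - real m - 1) * 1))) (at x)" if "x > 0" for x
    using that d by (auto intro!: derivative_eq_intros DERIV_fun_powr sum.cong add_pos_nonneg simp: algebra_simps)
  have "(\<Sum>i<N. w i * ((K - real m) * (x + d i) powr (K - real m - 1) * 1)) = 0" if "x > 0" for x
    by (rule deriv_zero[OF _ that D[OF that]]) (use Suc.IH in \<open>auto simp: c_def\<close>)
  then have "(K - real m) * (\<Sum>i<N. w i * (x + d i) powr (K - real (Suc m))) = 0" if "x > 0" for x
    using that by (simp add: sum_distrib_left algebra_simps)
  moreover have "K - real m \<noteq> 0" using K[of m] by simp
  ultimately show ?case using Suc.prems by simp
qed

lemma cov1_indep:
  fixes ts :: "nat \<Rightarrow> real" and n :: nat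
  assumes F: "\<And>s. s \<ge> 0 \<Longrightarrow> (\<Sum>j<n. a j * cov1 H K s (ts j)) = 0"
    and pos: "\<And>j. j < n \<Longrightarrow> ts j > 0" and inj: "inj_on ts {..<n}" and m: "m < n"
    and H: "H > 0" and K: "(0 < K \<and> K < 1) \<or> (1 < K \<and> K < 2)"
  shows "a m = 0"
proof -
  define c where "c = (if K < 1 then Gamma (1 - K) / (K * (2 - K)) else - (Gamma (2 - K) / (K * (K - 1))))"
  have c0: "c \<noteq> 0"
  proof (cases "K < 1")
    case True
    then have g: "Gamma (1 - K) > 0" by (intro Gamma_real_pos) simp
    have "c = Gamma (1 - K) / (K * (2 - K))" using True by (simp add: c_def)
    moreover have "Gamma (1 - K) / (K * (2 - K)) > 0" using g True K by (intro divide_pos_pos mult_pos_pos) auto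
    ultimately show ?thesis by linarith
  next
    case False
    then have g: "Gamma (2 - K) > 0" using K by (intro Gamma_real_pos) simp
    have "c = - (Gamma (2 - K) / (K * (K - 1)))" using False by (simp add: c_def)
    moreover have "Gamma (2 - K) / (K * (K - 1)) > 0" using g False K by (intro divide_pos_pos mult_pos_pos) auto
    ultimately show ?thesis by linarith
  qed
  have cov: "cov1 H K s u = c * (s powr (2*H*K) + u powr (2*H*K) - (s powr (2*H) + u powr (2*H)) powr K)" for s u
    by (simp add: cov1_def c_def algebra_simps)
  define b where "b j = ts j powr (2*H)" for j
  define e where "e j = ts j powr (2*H*K)" for j
  have key: "(\<Sum>j<n. a j) * x powr K + (\<Sum>j<n. a j * e j) - (\<Sum>j<n. a j * (x + b j) powr K) = 0" if x: "x > 0" for x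
  proof -
    define s where "s = x powr (1/(2*H))"
    have s0: "s \<ge> 0" by (simp add: s_def)
    have s1: "s powr (2*H) = x" using H x by (simp add: s_def powr_powr)
    have s2: "s powr (2*H*K) = x powr K" using H x by (simp add: s_def powr_powr)
    have "0 = (\<Sum>j<n. a j * cov1 H K s (ts j))" using F[OF s0] by simp
    also have "\<dots> = c * (\<Sum>j<n. a j * (x powr K + e j - (x + b j) powr K))"
      by (simp only: cov s1 s2 e_def b_def) (simp add: sum_distrib_left algebra_simps)
    finally have "(\<Sum>j<n. a j * (x powr K + e j - (x + b j) powr K)) = 0" using c0 by simp
    moreover have "(\<Sum>j<n. a j * x powr K) = (\<Sum>j<n. a j) * x powr K" by (simp add: sum_distrib_right)
    ultimately show ?thesis by (simp add: algebra_simps sum.distrib sum_subtractf)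
  qed
  define w where "w i = (if i = 0 then (\<Sum>j<n. a j) else - a (i - 1))" for i
  define d where "d i = (if i = 0 then 0 else b (i - 1))" for i
  have base: "(\<Sum>i<Suc n. w i * (x + d i) powr K) + (\<Sum>j<n. a j * e j) = 0" if "x > 0" for x
  proof -
    have "(\<Sum>i<Suc n. w i * (x + d i) powr K) = w 0 * (x + d 0) powr K + (\<Sum>j<n. w (Suc j) * (x + d (Suc j)) powr K)"
      by (rule sum.lessThan_Suc_shift)
    also have "\<dots> = (\<Sum>j<n. a j) * x powr K - (\<Sum>j<n. a j * (x + b j) powr K)"
      by (simp add: w_def d_def sum_negf)
    finally show ?thesis using key[OF that] by simp
  qed
  have dnn: "d i \<ge> 0" for i by (simp add: d_def b_def)
  have Knat: "K \<noteq> real k" for k :: nat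
  proof
    assume "K = real k"
    then have "0 < real k" "real k < 2" "real k \<noteq> 1" using K by auto
    then have "k > 0" "k < 2" "k \<noteq> 1" by auto
    then show False by arith
  qed
  have PS: "(\<Sum>i<Suc n. w i * (1 + d i) powr (K - real (Suc k))) = 0" for k
    using powsum_derivs[where N="Suc n" and w=w and d=d and K=K and C="\<Sum>j<n. a j * e j" and m="Suc k" and x=1,
        OF base dnn Knat] by simp
  define z where "z i = w i * (1 + d i) powr (K - 1)" for i
  define y where "y i = 1 / (1 + d i)" for i
  have zy: "(\<Sum>i<Suc n. z i * y i ^ k) = 0" for k
  proof -
    have "(1 + d i) powr (K - real (Suc k)) = (1 + d i) powr (K - 1) * y i ^ k" for i
    proof -
      have p: "1 + d i > 0" using dnn[of i] by linarith
      have "(1 + d i) powr (K - real (Suc k)) = (1 + d i) powr (K - 1) / (1 + d i) powr (real k)"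
        by (simp add: powr_diff[symmetric] algebra_simps)
      also have "\<dots> = (1 + d i) powr (K - 1) / (1 + d i) ^ k" using p by (simp add: powr_realpow)
      finally show ?thesis by (simp add: y_def power_one_over divide_inverse power_inverse)
    qed
    then show ?thesis using PS[of k] by (simp add: z_def mult.assoc)
  qed
  have injd: "inj_on d {..<Suc n}"
  proof (rule inj_onI)
    fix i j assume i: "i \<in> {..<Suc n}" and j: "j \<in> {..<Suc n}" and eq: "d i = d j"
    have bpos: "k < n \<Longrightarrow> b k > 0" for k using pos[of k] by (simp add: b_def)
    have binj: "k < n \<Longrightarrow> l < n \<Longrightarrow> b k = b l \<Longrightarrow> k = l" for k l
    proof -
      assume k: "k < n" and l: "l < n" and "b k = b l"
      then have "(ts k powr (2*H)) powr (1/(2*H)) = (ts l powr (2*H)) powr (1/(2*H))" by (simp add: b_def)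
      then have "ts k = ts l" using H pos[OF k] pos[OF l] by (simp add: powr_powr)
      then show "k = l" using inj k l unfolding inj_on_def by auto
    qed
    show "i = j"
    proof (cases "i = 0"; cases "j = 0")
      assume a: "i = 0" "j \<noteq> 0"
      then have "j - 1 < n" using j by auto
      then show ?thesis using eq bpos[of "j - 1"] a by (simp add: d_def)
    next
      assume a: "i \<noteq> 0" "j = 0"
      then have "i - 1 < n" using i by auto
      then show ?thesis using eq bpos[of "i - 1"] a by (simp add: d_def)
    next
      assume a: "i \<noteq> 0" "j \<noteq> 0"
      then have "i - 1 < n" "j - 1 < n" using i j by auto
      then show ?thesis using eq binj[of "i - 1" "j - 1"] a by (simp add: d_def)
    qed simp
  qed
  have injy: "inj_on y {..<Suc n}"
  proof (rule inj_onI)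
    fix i j assume "i \<in> {..<Suc n}" "j \<in> {..<Suc n}" "y i = y j"
    then have "d i = d j" using dnn[of i] dnn[of j] by (simp add: y_def field_simps)
    then show "i = j" using injd \<open>i \<in> _\<close> \<open>j \<in> _\<close> unfolding inj_on_def by blast
  qed
  have "z (Suc m) = 0" by (rule vander[OF injy zy]) (use m in simp)
  moreover have "(1 + d (Suc m)) powr (K - 1) > 0" using dnn[of "Suc m"] by simp
  ultimately have "w (Suc m) = 0" by (simp add: z_def)
  then show ?thesis by (simp add: w_def)
qed

lemma psd:
  fixes G :: "real \<Rightarrow> 'a \<Rightarrow> real" and R :: "real \<Rightarrow> real \<Rightarrow> real"
  assumes cov: "\<And>s t. s \<ge> 0 \<Longrightarrow> t \<ge> 0 \<Longrightarrow>
                integrable M (\<lambda>\<omega>. G s \<omega> * G t \<omega>) \<and>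
                prob_space.expectation M (\<lambda>\<omega>. G s \<omega> * G t \<omega>) = R s t"
    and p: "\<And>i. i < N \<Longrightarrow> p i \<ge> 0"
  shows "0 \<le> (\<Sum>i<N. \<Sum>j<N. c i * R (p i) (p j) * c j)"
proof -
  have int: "integrable M (\<lambda>\<omega>. G (p i) \<omega> * G (p j) \<omega>)" if "i < N" "j < N" for i j
    using cov[OF p[OF that(1)] p[OF that(2)]] by simp
  have "(\<Sum>i<N. \<Sum>j<N. c i * R (p i) (p j) * c j)
      = (\<Sum>i<N. \<Sum>j<N. integral\<^sup>L M (\<lambda>\<omega>. c i * c j * (G (p i) \<omega> * G (p j) \<omega>)))"
  proof (intro sum.cong refl)
    fix i j assume "i \<in> {..<N}" "j \<in> {..<N}"
    then have ij: "i < N" "j < N" by auto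
    have "R (p i) (p j) = integral\<^sup>L M (\<lambda>\<omega>. G (p i) \<omega> * G (p j) \<omega>)"
      using cov[OF p[OF ij(1)] p[OF ij(2)]] by simp
    then show "c i * R (p i) (p j) * c j = integral\<^sup>L M (\<lambda>\<omega>. c i * c j * (G (p i) \<omega> * G (p j) \<omega>))"
      by simp
  qed
  also have "\<dots> = (\<Sum>i<N. integral\<^sup>L M (\<lambda>\<omega>. \<Sum>j<N. c i * c j * (G (p i) \<omega> * G (p j) \<omega>)))"
  proof (rule sum.cong[OF refl])
    fix i assume "i \<in> {..<N}"
    then have i: "i < N" by simp
    show "(\<Sum>j<N. integral\<^sup>L M (\<lambda>\<omega>. c i * c j * (G (p i) \<omega> * G (p j) \<omega>)))
       = integral\<^sup>L M (\<lambda>\<omega>. \<Sum>j<N. c i * c j * (G (p i) \<omega> * G (p j) \<omega>))"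
      by (subst Bochner_Integration.integral_sum) (use int i in \<open>auto intro: integrable_mult_right\<close>)
  qed
  also have "\<dots> = integral\<^sup>L M (\<lambda>\<omega>. \<Sum>i<N. \<Sum>j<N. c i * c j * (G (p i) \<omega> * G (p j) \<omega>))"
    by (subst Bochner_Integration.integral_sum) (use int in \<open>auto intro!: integrable_sum integrable_mult_right\<close>)
  also have "\<dots> = integral\<^sup>L M (\<lambda>\<omega>. (\<Sum>i<N. c i * G (p i) \<omega>)^2)"
    by (simp add: power2_eq_square sum_product algebra_simps)
  also have "\<dots> \<ge> 0" by simp
  finally show ?thesis .
qed

lemma quad_zero:
  fixes F V :: real
  assumes "\<And>l. 0 \<le> 2 * l * F + l^2 * V"
  shows "F = 0"
proof -
  define u where "u = \<bar>V\<bar> + 1"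
  have u: "u > 0" by (simp add: u_def)
  have "0 \<le> 2 * (-F/u) * F + (-F/u)^2 * V" by (rule assms)
  then have "0 \<le> u^2 * (2 * (-F/u) * F + (-F/u)^2 * V)" using u by simp
  also have "u^2 * (2 * (-F/u) * F + (-F/u)^2 * V) = F^2 * (V - 2 * u)"
    using u by (simp add: field_simps power2_eq_square)
  finally have "0 \<le> F^2 * (V - 2 * u)" .
  moreover have "V - 2 * u < 0" unfolding u_def by (cases "V \<ge> 0") auto
  ultimately have "F^2 \<le> 0" by (simp add: zero_le_mult_iff)
  then show ?thesis by simp
qed

lemma zeroF:
  fixes R :: "real \<Rightarrow> real \<Rightarrow> real" and ts :: "nat \<Rightarrow> real" and a :: "nat \<Rightarrow> real"
  assumes psd: "\<And>(N::nat) (p::nat \<Rightarrow> real) (c::nat \<Rightarrow> real). (\<And>i. i < N \<Longrightarrow> p i \<ge> 0) \<Longrightarrow> 0 \<le> (\<Sum>i<N. \<Sum>j<N. c i * R (p i) (p j) * c j)"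
    and sym: "\<And>s t. s \<ge> 0 \<Longrightarrow> t \<ge> 0 \<Longrightarrow> R s t = R t s"
    and ts: "\<And>i. i < n \<Longrightarrow> ts i \<ge> 0"
    and Q: "(\<Sum>i<n. \<Sum>j<n. a i * R (ts i) (ts j) * a j) = 0"
    and s: "s \<ge> 0"
  shows "(\<Sum>j<n. a j * R s (ts j)) = 0"
proof -
  define F where "F = (\<Sum>j<n. a j * R s (ts j))"
  have "0 \<le> 2 * l * F + l^2 * R s s" for l
  proof -
    define p where "p = ts(n := s)"
    define c where "c = a(n := l)"
    have p0: "p i \<ge> 0" if "i < Suc n" for i using ts s that by (cases "i = n") (auto simp: p_def)
    have "0 \<le> (\<Sum>i<Suc n. \<Sum>j<Suc n. c i * R (p i) (p j) * c j)" by (rule psd) (rule p0)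
    also have "\<dots> = (\<Sum>i<n. \<Sum>j<n. c i * R (p i) (p j) * c j) + (\<Sum>i<n. c i * R (p i) (p n) * c n)
        + ((\<Sum>j<n. c n * R (p n) (p j) * c j) + c n * R (p n) (p n) * c n)"
      by (simp add: sum.distrib)
    also have "(\<Sum>i<n. \<Sum>j<n. c i * R (p i) (p j) * c j) = (\<Sum>i<n. \<Sum>j<n. a i * R (ts i) (ts j) * a j)"
      by (intro sum.cong refl) (auto simp: p_def c_def)
    also have "(\<Sum>i<n. c i * R (p i) (p n) * c n) = l * F"
      unfolding F_def sum_distrib_left
      by (intro sum.cong refl) (auto simp: p_def c_def sym[OF ts s] algebra_simps)
    also have "(\<Sum>j<n. c n * R (p n) (p j) * c j) = l * F"
      unfolding F_def sum_distrib_left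
      by (intro sum.cong refl) (auto simp: p_def c_def algebra_simps)
    also have "c n * R (p n) (p n) * c n = l^2 * R s s"
      by (simp add: p_def c_def power2_eq_square)
    finally show ?thesis using Q by (simp add: algebra_simps)
  qed
  then have "F = 0" by (rule quad_zero)
  then show ?thesis by (simp add: F_def)
qed

lemma tt2: "(t::real) + t = 2 * t" by simp

lemma pp2: "((t::real) powr a + t powr a) powr K = 2 powr K * t powr (a * K)"
  by (simp only: tt2 powr_mult powr_powr)

lemma pp2': "(2 * (t::real) powr a) powr K = 2 powr K * t powr (a * K)"
  by (simp only: powr_mult powr_powr)

lemma p2t: "t \<ge> 0 \<Longrightarrow> (2 * (t::real)) powr a = 2 powr a * t powr a"
  by (simp add: powr_mult)

lemma cov9_diag: "t \<ge> 0 \<Longrightarrow> cov9 H K t t = (2 powr K - 2 powr (2*H*K) / 2) * t powr (2*H*K)"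
  unfolding cov9_def by (simp only: pp2 pp2' tt2 p2t mult.assoc) (simp add: algebra_simps diff_divide_distrib)

lemma diag_0:
  assumes R: "R = cov1 H K" and "H * K < 1"
  shows "\<exists>A \<beta>. \<beta> < 2 \<and> (\<forall>t\<ge>0. R t t = A * t powr \<beta>)"
proof -
  show ?thesis
    by (rule exI[of _ "if K < 1 then Gamma (1-K)/(K*(2-K)) * (2 - 2 powr K) else Gamma (2-K)/(K*(K-1)) * (2 powr K - 2)"],
        rule exI[of _ "2*H*K"]) (use \<open>H * K < 1\<close> in \<open>auto simp: R cov1_def pp2 pp2' algebra_simps diff_divide_distrib\<close>)
qed

lemma diag_1:
  assumes R: "R = cov2 H" and "H < 1"
  shows "\<exists>A \<beta>. \<beta> < 2 \<and> (\<forall>t\<ge>0. R t t = A * t powr \<beta>)"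
proof -
  show ?thesis
    by (rule exI[of _ 1], rule exI[of _ "2*H"]) (use \<open>H < 1\<close> in \<open>auto simp: R cov2_def\<close>)
qed

lemma diag_2:
  assumes R: "R = cov3 H" and "H < 1"
  shows "\<exists>A \<beta>. \<beta> < 2 \<and> (\<forall>t\<ge>0. R t t = A * t powr \<beta>)"
proof -
  show ?thesis
    by (rule exI[of _ "2 powr (2*H)"], rule exI[of _ "2*H"]) (use \<open>H < 1\<close> in \<open>auto simp: R cov3_def tt2 p2t powr_mult\<close>)
qed

lemma diag_3:
  assumes R: "R = cov4 H" and "H < 1"
  shows "\<exists>A \<beta>. \<beta> < 2 \<and> (\<forall>t\<ge>0. R t t = A * t powr \<beta>)"
proof -
  show ?thesis
    by (rule exI[of _ "2 - 2 powr (2*H) / 2"], rule exI[of _ "2*H"]) (use \<open>H < 1\<close> in \<open>auto simp: R cov4_def tt2 p2t powr_mult algebra_simps diff_divide_distrib\<close>)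
qed

lemma diag_4:
  assumes R: "R = cov5 H" and "H < 1/2"
  shows "\<exists>A \<beta>. \<beta> < 2 \<and> (\<forall>t\<ge>0. R t t = A * t powr \<beta>)"
proof -
  show ?thesis
    by (rule exI[of _ "2 powr (2*H) - 1"], rule exI[of _ "2*H"]) (use \<open>H < 1/2\<close> in \<open>auto simp: R cov5_def tt2 p2t powr_mult algebra_simps diff_divide_distrib\<close>)
qed

lemma diag_5:
  assumes R: "R = cov6 H" and "H < 1/2"
  shows "\<exists>A \<beta>. \<beta> < 2 \<and> (\<forall>t\<ge>0. R t t = A * t powr \<beta>)"
proof -
  show ?thesis
    by (rule exI[of _ 1], rule exI[of _ "2*H"]) (use \<open>H < 1/2\<close> in \<open>auto simp: R cov6_def\<close>)
qed

lemma diag_6: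
  assumes R: "R = cov7 H K" and "H < 1/2"
  shows "\<exists>A \<beta>. \<beta> < 2 \<and> (\<forall>t\<ge>0. R t t = A * t powr \<beta>)"
proof -
  show ?thesis
    by (rule exI[of _ "1 - K * 2 powr (2*H) / 2"], rule exI[of _ "2*H"]) (use \<open>H < 1/2\<close> in \<open>auto simp: R cov7_def tt2 p2t powr_mult algebra_simps diff_divide_distrib\<close>)
qed

lemma diag_7:
  assumes R: "R = cov8 H K" and "H * K < 1"
  shows "\<exists>A \<beta>. \<beta> < 2 \<and> (\<forall>t\<ge>0. R t t = A * t powr \<beta>)"
proof -
  show ?thesis
    by (rule exI[of _ 1], rule exI[of _ "2*H*K"]) (use \<open>H * K < 1\<close> in \<open>auto simp: R cov8_def pp2 pp2'\<close>)
qed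

lemma diag_8:
  assumes R: "R = cov9 H K" and "H * K < 1"
  shows "\<exists>A \<beta>. \<beta> < 2 \<and> (\<forall>t\<ge>0. R t t = A * t powr \<beta>)"
proof -
  show ?thesis
    by (rule exI[of _ "2 powr K - 2 powr (2*H*K) / 2"], rule exI[of _ "2*H*K"]) (use \<open>H * K < 1\<close> in \<open>simp add: R cov9_diag\<close>)
qed

lemma diag_9:
  assumes R: "R = cov9 H K" and "0 < H" and "H < 1/2" and "0 < K" and "K < 1"
  shows "\<exists>A \<beta>. \<beta> < 2 \<and> (\<forall>t\<ge>0. R t t = A * t powr \<beta>)"
proof -
  have "H * K < H" using \<open>0 < H\<close> \<open>K < 1\<close> by simp
  then have "H * K < 1" using \<open>H < 1/2\<close> by linarith
  show ?thesis
    by (rule exI[of _ "2 powr K - 2 powr (2*H*K) / 2"], rule exI[of _ "2*H*K"]) (use \<open>H * K < 1\<close> in \<open>simp add: R cov9_diag\<close>)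
qed

lemma diag_exists:
  assumes cases:
    "(R = cov1 H K \<and> ((0 < K \<and> K < 1) \<or> (1 < K \<and> K < 2)) \<and> 0 < H \<and> H < 1
        \<and> 0 < H * K \<and> H * K < 1)
     \<or> (R = cov2 H \<and> 0 < H \<and> H < 1)
     \<or> (R = cov3 H \<and> 0 < H \<and> H < 1)
     \<or> (R = cov4 H \<and> 0 < H \<and> H < 1)
     \<or> (R = cov5 H \<and> 0 < H \<and> H < 1/2)
     \<or> (R = cov6 H \<and> 0 < H \<and> H < 1/2)
     \<or> (R = cov7 H K \<and> 0 < H \<and> H < 1/2 \<and> 0 < K \<and> K < 1)
     \<or> (R = cov8 H K \<and> 0 < H \<and> H < 1 \<and> ((0 < K \<and> K < 1) \<or> (1 < K \<and> K < 2))
        \<and> 0 < H * K \<and> H * K < 1)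
     \<or> (R = cov9 H K \<and> ((0 < H \<and> H < 1 \<and> 1 < K \<and> K < 2 \<and> 0 < H * K \<and> H * K < 1)
                         \<or> (0 < H \<and> H < 1/2 \<and> 0 < K \<and> K < 1)))"
  shows "\<exists>A \<beta>. \<beta> < 2 \<and> (\<forall>t\<ge>0. R t t = A * t powr \<beta>)"
  using cases by (elim disjE conjE; blast intro: diag_0 diag_1 diag_2 diag_3 diag_4 diag_5 diag_6 diag_7 diag_8 diag_9)

lemma indep_all:
  fixes R :: "real \<Rightarrow> real \<Rightarrow> real" and ts :: "nat \<Rightarrow> real" and a :: "nat \<Rightarrow> real" and n m :: nat
  assumes cases:
    "(R = cov1 H K \<and> ((0 < K \<and> K < 1) \<or> (1 < K \<and> K < 2)) \<and> 0 < H \<and> H < 1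
        \<and> 0 < H * K \<and> H * K < 1)
     \<or> (R = cov2 H \<and> 0 < H \<and> H < 1)
     \<or> (R = cov3 H \<and> 0 < H \<and> H < 1)
     \<or> (R = cov4 H \<and> 0 < H \<and> H < 1)
     \<or> (R = cov5 H \<and> 0 < H \<and> H < 1/2)
     \<or> (R = cov6 H \<and> 0 < H \<and> H < 1/2)
     \<or> (R = cov7 H K \<and> 0 < H \<and> H < 1/2 \<and> 0 < K \<and> K < 1)
     \<or> (R = cov8 H K \<and> 0 < H \<and> H < 1 \<and> ((0 < K \<and> K < 1) \<or> (1 < K \<and> K < 2))
        \<and> 0 < H * K \<and> H * K < 1)
     \<or> (R = cov9 H K \<and> ((0 < H \<and> H < 1 \<and> 1 < K \<and> K < 2 \<and> 0 < H * K \<and> H * K < 1)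
                         \<or> (0 < H \<and> H < 1/2 \<and> 0 < K \<and> K < 1)))"
    and F: "\<And>s. s \<ge> 0 \<Longrightarrow> (\<Sum>j<n. a j * R s (ts j)) = 0"
    and pos: "\<And>j. j < n \<Longrightarrow> ts j > 0" and inj: "inj_on ts {..<n}" and m: "m < n"
  shows "a m = 0"
proof -
  have c1: "R = cov1 H K \<Longrightarrow> (0 < K \<and> K < 1) \<or> (1 < K \<and> K < 2) \<Longrightarrow> 0 < H \<Longrightarrow> a m = 0"
    by (rule cov1_indep[OF _ pos inj m]) (use F in auto)
  have c2: "R = cov2 H \<Longrightarrow> 0 < H \<Longrightarrow> H < 1 \<Longrightarrow> a m = 0"
    by (rule indep_sing[OF F pos inj m]) (auto simp: cov2_A cov2_B)
  have c3: "R = cov3 H \<Longrightarrow> 0 < H \<Longrightarrow> H < 1 \<Longrightarrow> a m = 0"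
    by (rule indep_sing[OF F pos inj m]) (auto simp: cov3_A cov3_B)
  have c4: "R = cov4 H \<Longrightarrow> 0 < H \<Longrightarrow> H < 1 \<Longrightarrow> a m = 0"
    by (rule indep_sing[OF F pos inj m]) (auto simp: cov4_A cov4_B)
  have c5: "R = cov5 H \<Longrightarrow> 0 < H \<Longrightarrow> a m = 0"
    by (rule indep_sing[OF F pos inj m]) (auto simp: cov5_A cov5_B)
  have c6: "R = cov6 H \<Longrightarrow> 0 < H \<Longrightarrow> H < 1/2 \<Longrightarrow> a m = 0"
    by (rule indep_sing[OF F pos inj m]) (auto simp: cov6_A cov6_B)
  have c7: "R = cov7 H K \<Longrightarrow> 0 < H \<Longrightarrow> H < 1 \<Longrightarrow> K < 1 \<Longrightarrow> a m = 0"
    by (rule indep_sing[OF F pos inj m]) (auto simp: cov7_A cov7_B)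
  have c8: "R = cov8 H K \<Longrightarrow> 0 < H * K \<Longrightarrow> H * K < 1 \<Longrightarrow> a m = 0"
    by (rule indep_sing[OF F pos inj m]) (auto simp: cov8_A cov8_B)
  have c9: "R = cov9 H K \<Longrightarrow> 0 < H * K \<Longrightarrow> H * K < 1 \<Longrightarrow> a m = 0"
    by (rule indep_sing[OF F pos inj m]) (auto simp: cov9_A cov9_B)
  have c9': "R = cov9 H K \<Longrightarrow> 0 < H \<Longrightarrow> H < 1/2 \<Longrightarrow> 0 < K \<Longrightarrow> K < 1 \<Longrightarrow> a m = 0"
  proof -
    assume a: "R = cov9 H K" "0 < H" "H < 1/2" "0 < K" "K < 1"
    have "H * K < H" using a by simp
    then have "H * K < 1" using a by linarith
    moreover have "0 < H * K" using a by simp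
    ultimately show ?thesis using c9 a by blast
  qed
  show ?thesis
    using cases
    apply (elim disjE conjE)
    subgoal by (rule c1) simp_all
    subgoal by (rule c1) simp_all
    subgoal by (rule c2) simp_all
    subgoal by (rule c3) simp_all
    subgoal by (rule c4) simp_all
    subgoal by (rule c5) simp_all
    subgoal by (rule c6) simp_all
    subgoal by (rule c7) simp_all
    subgoal by (rule c8) simp_all
    subgoal by (rule c8) simp_all
    subgoal by (rule c9) simp_all
    subgoal by (rule c9') simp_all
    done
qed

lemma incr_mono:
  fixes ts :: "nat \<Rightarrow> real"
  assumes "\<forall>i. Suc i < n \<longrightarrow> ts i < ts (Suc i)"
  shows "i < j \<Longrightarrow> j < n \<Longrightarrow> ts i < ts j"
proof (induction j)
  case 0 then show ?case by simp
next
  case (Suc j)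
  show ?case
  proof (cases "i = j")
    case True then show ?thesis using assms Suc.prems by auto
  next
    case False
    then have "ts i < ts j" using Suc by auto
    also have "ts j < ts (Suc j)" using assms Suc.prems by auto
    finally show ?thesis .
  qed
qed

theorem theorem1p1:
  fixes M :: "'a measure" and G :: "real \<Rightarrow> 'a \<Rightarrow> real"
    and R :: "real \<Rightarrow> real \<Rightarrow> real" and H K :: real
  assumes cases:
    "(R = cov1 H K \<and> ((0 < K \<and> K < 1) \<or> (1 < K \<and> K < 2)) \<and> 0 < H \<and> H < 1
        \<and> 0 < H * K \<and> H * K < 1)
     \<or> (R = cov2 H \<and> 0 < H \<and> H < 1)
     \<or> (R = cov3 H \<and> 0 < H \<and> H < 1)
     \<or> (R = cov4 H \<and> 0 < H \<and> H < 1)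
     \<or> (R = cov5 H \<and> 0 < H \<and> H < 1/2)
     \<or> (R = cov6 H \<and> 0 < H \<and> H < 1/2)
     \<or> (R = cov7 H K \<and> 0 < H \<and> H < 1/2 \<and> 0 < K \<and> K < 1)
     \<or> (R = cov8 H K \<and> 0 < H \<and> H < 1 \<and> ((0 < K \<and> K < 1) \<or> (1 < K \<and> K < 2))
        \<and> 0 < H * K \<and> H * K < 1)
     \<or> (R = cov9 H K \<and> ((0 < H \<and> H < 1 \<and> 1 < K \<and> K < 2 \<and> 0 < H * K \<and> H * K < 1)
                         \<or> (0 < H \<and> H < 1/2 \<and> 0 < K \<and> K < 1)))"
    and prob: "prob_space M"
    and gauss: "gaussian_process M G"
    and centered: "\<And>t. t \<ge> 0 \<Longrightarrow> prob_space.expectation M (G t) = 0"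
    and cov: "\<And>s t. s \<ge> 0 \<Longrightarrow> t \<ge> 0 \<Longrightarrow>
                integrable M (\<lambda>\<omega>. G s \<omega> * G t \<omega>) \<and>
                prob_space.expectation M (\<lambda>\<omega>. G s \<omega> * G t \<omega>) = R s t"
  shows "(\<exists>c \<beta>. c > 0 \<and> \<beta> < 2 \<and>
            (\<forall>t\<ge>0. prob_space.expectation M (\<lambda>\<omega>. (G t \<omega>)\<^sup>2) \<le> c * t powr \<beta>))
       \<and> (\<forall>(n::nat) (ts::nat \<Rightarrow> real). n \<ge> 1 \<longrightarrow> 0 < ts 0 \<longrightarrow>
            (\<forall>i. Suc i < n \<longrightarrow> ts i < ts (Suc i)) \<longrightarrow>
            (\<forall>a::nat \<Rightarrow> real. (\<exists>i<n. a i \<noteq> 0) \<longrightarrow>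
               (\<Sum>i<n. \<Sum>j<n. a i * R (ts i) (ts j) * a j) > 0))"
proof -
  have sym: "R s t = R t s" if s: "s \<ge> 0" and t: "t \<ge> 0" for s t
  proof -
    have "R s t = prob_space.expectation M (\<lambda>\<omega>. G s \<omega> * G t \<omega>)" using cov[OF s t] by simp
    also have "\<dots> = prob_space.expectation M (\<lambda>\<omega>. G t \<omega> * G s \<omega>)" by (simp add: mult.commute)
    also have "\<dots> = R t s" using cov[OF t s] by simp
    finally show ?thesis .
  qed
  have part1: "\<exists>c \<beta>. c > 0 \<and> \<beta> < 2 \<and>
            (\<forall>t\<ge>0. prob_space.expectation M (\<lambda>\<omega>. (G t \<omega>)\<^sup>2) \<le> c * t powr \<beta>)"
  proof -
    obtain A \<beta> where A: "\<beta> < 2" "\<And>t. t \<ge> 0 \<Longrightarrow> R t t = A * t powr \<beta>"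
      using diag_exists[OF cases] by blast
    show ?thesis
    proof (intro exI conjI allI impI)
      show "\<bar>A\<bar> + 1 > 0" by simp
      show "\<beta> < 2" by fact
      fix t :: real assume t: "t \<ge> 0"
      have "prob_space.expectation M (\<lambda>\<omega>. (G t \<omega>)\<^sup>2) = R t t"
        using cov[OF t t] by (simp add: power2_eq_square)
      also have "\<dots> = A * t powr \<beta>" using A(2)[OF t] .
      also have "\<dots> \<le> (\<bar>A\<bar> + 1) * t powr \<beta>" by (intro mult_right_mono) auto
      finally show "prob_space.expectation M (\<lambda>\<omega>. (G t \<omega>)\<^sup>2) \<le> (\<bar>A\<bar> + 1) * t powr \<beta>" .
    qed
  qed
  have psd': "0 \<le> (\<Sum>i<N. \<Sum>j<N. c i * R (p i) (p j) * c j)" if "\<And>i. i < N \<Longrightarrow> p i \<ge> 0"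
    for N :: nat and p c :: "nat \<Rightarrow> real"
    by (rule psd[OF cov]) (use that in auto)
  have part2: "\<forall>(n::nat) (ts::nat \<Rightarrow> real). n \<ge> 1 \<longrightarrow> 0 < ts 0 \<longrightarrow>
            (\<forall>i. Suc i < n \<longrightarrow> ts i < ts (Suc i)) \<longrightarrow>
            (\<forall>a::nat \<Rightarrow> real. (\<exists>i<n. a i \<noteq> 0) \<longrightarrow>
               (\<Sum>i<n. \<Sum>j<n. a i * R (ts i) (ts j) * a j) > 0)"
  proof (intro allI impI)
    fix n :: nat and ts :: "nat \<Rightarrow> real" and a :: "nat \<Rightarrow> real"
    assume n: "n \<ge> 1" and t0: "0 < ts 0" and incr: "\<forall>i. Suc i < n \<longrightarrow> ts i < ts (Suc i)"
      and ex: "\<exists>i<n. a i \<noteq> 0"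
    have pos: "ts j > 0" if "j < n" for j
    proof (cases "j = 0")
      case True then show ?thesis using t0 by simp
    next
      case False
      then have "ts 0 < ts j" using incr_mono[OF incr, of 0 j] that by simp
      then show ?thesis using t0 by simp
    qed
    have inj: "inj_on ts {..<n}"
    proof (rule inj_onI)
      fix i j assume i: "i \<in> {..<n}" and j: "j \<in> {..<n}" and eq: "ts i = ts j"
      show "i = j"
      proof (rule ccontr)
        assume "i \<noteq> j"
        then consider "i < j" | "j < i" by linarith
        then show False
          using incr_mono[OF incr, of i j] incr_mono[OF incr, of j i] i j eq by (cases) auto
      qed
    qed
    have Q0: "0 \<le> (\<Sum>i<n. \<Sum>j<n. a i * R (ts i) (ts j) * a j)"
      by (rule psd') (use pos in \<open>auto intro: less_imp_le\<close>)
    show "(\<Sum>i<n. \<Sum>j<n. a i * R (ts i) (ts j) * a j) > 0"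
    proof (rule ccontr)
      assume "\<not> (\<Sum>i<n. \<Sum>j<n. a i * R (ts i) (ts j) * a j) > 0"
      then have Q: "(\<Sum>i<n. \<Sum>j<n. a i * R (ts i) (ts j) * a j) = 0" using Q0 by linarith
      have F: "(\<Sum>j<n. a j * R s (ts j)) = 0" if "s \<ge> 0" for s
        by (rule zeroF[where R=R, OF psd' sym _ Q that]) (use pos in \<open>auto intro: less_imp_le\<close>)
      have "a m = 0" if "m < n" for m
        by (rule indep_all[OF cases F pos inj that])
      then show False using ex by blast
    qed
  qed
  show ?thesis using part1 part2 by blast
qed

end
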